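(* For all $\delta,B>0$ there are $C,d_0\ge 1$ such that the following holds. Let $M$ be a positive integer and let $A_1,\ldots,A_K\subset[-M,M]\cap\mathbb Z$ with $K\ge CM$ and $|A_i|\ge\delta M\ge 2$ for all $i\in[K]$. Then there are $a\in\mathbb Z$ and $d\in\mathbb N$ with $1\le d\le d_0$ such that $$\{a+id:\ 0\le i\le BM^2\}\subset A_1+A_2+\cdots+A_K,$$ where $A_1+\cdots+A_K=\{a_1+\cdots+a_K: a_i\in A_i\ \forall i\}$. *)

theory Defs
  imports Complex_Main
begin

definition sumset :: "(nat \<Rightarrow> int set) \<Rightarrow> nat \<Rightarrow> int set" where
  "sumset A K = {(\<Sum>i=1..K. f i) | f. \<forall>i\<in>{1..K}. f i \<in> A i}"

end

theory Submission
  imports Defs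
begin

lemma sumset_0: "sumset A 0 = {0}"
  unfolding sumset_def by auto

lemma sumset_Suc:
  assumes "x \<in> sumset A k" "y \<in> A (Suc k)"
  shows "x + y \<in> sumset A (Suc k)"
proof -
  obtain f where f: "x = (\<Sum>i=1..k. f i)" "\<forall>i\<in>{1..k}. f i \<in> A i"
    using assms(1) unfolding sumset_def by auto
  define f' where "f' = f(Suc k := y)"
  have "(\<Sum>i=1..Suc k. f' i) = (\<Sum>i=1..k. f' i) + y"
    by (simp add: f'_def)
  also have "(\<Sum>i=1..k. f' i) = (\<Sum>i=1..k. f i)"
    by (rule sum.cong) (auto simp: f'_def)
  finally have "x + y = (\<Sum>i=1..Suc k. f' i)" using f by simp
  moreover have "\<forall>i\<in>{1..Suc k}. f' i \<in> A i"
    using f(2) assms(2) by (auto simp: f'_def le_Suc_eq)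
  ultimately show ?thesis unfolding sumset_def by blast
qed

lemma ap_ext:
  fixes a u :: int and g L t :: nat
  assumes "{a + int j * int g | j. j \<le> L} \<subseteq> sumset A k"
    "u \<in> A (Suc k)" "u + int t * int g \<in> A (Suc k)" "t \<le> L + 1"
  shows "{(a + u) + int j * int g | j. j \<le> L + t} \<subseteq> sumset A (Suc k)"
proof (rule subsetI)
  fix z assume "z \<in> {(a + u) + int j * int g | j. j \<le> L + t}"
  then obtain j where j: "z = (a + u) + int j * int g" "j \<le> L + t" by auto
  show "z \<in> sumset A (Suc k)"
  proof (cases "j \<le> L")
    case True
    then have "a + int j * int g \<in> sumset A k" using assms(1) by blast
    from sumset_Suc[OF this assms(2)] show ?thesis using j by (simp add: algebra_simps)
  next
    case False
    define j' where "j' = j - t"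
    have jj: "int j = int j' + int t" "j' \<le> L" using False j(2) assms(4) by (auto simp: j'_def)
    then have "a + int j' * int g \<in> sumset A k" using assms(1) by blast
    from sumset_Suc[OF this assms(3)] show ?thesis using j jj by (simp add: algebra_simps)
  qed
qed

lemma grow:
  fixes g :: nat and S :: "nat set" and \<tau> :: real and M :: nat
  assumes ne: "\<forall>k\<in>{1..K}. A k \<noteq> {}"
    and Sg: "\<forall>k\<in>S. \<exists>u. u \<in> A k \<and> u + int g \<in> A k"
    and ST: "\<forall>k\<in>S. \<exists>v T. v \<in> A k \<and> v + int T * int g \<in> A k \<and> \<tau> \<le> real T \<and> T \<le> 2*M"
    and tau: "\<tau> \<ge> 0" and SK: "S \<subseteq> {1..K}"
  shows "k \<le> K \<Longrightarrow> \<exists>a L. {a + int j * int g | j. j \<le> L} \<subseteq> sumset A k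
     \<and> real (card (S \<inter> {1..k})) \<le> real L
     \<and> \<tau> * (real (card (S \<inter> {1..k})) - 2 * real M) \<le> real L"
proof (induction k)
  case 0
  have "{0 + int j * int g | j. j \<le> (0::nat)} \<subseteq> sumset A 0" by (auto simp: sumset_0)
  moreover have "\<tau> * (0 - 2 * real M) \<le> 0" using tau by (simp add: mult_nonneg_nonpos)
  ultimately show ?case by fastforce
next
  case (Suc k)
  then obtain a L where IH: "{a + int j * int g | j. j \<le> L} \<subseteq> sumset A k"
     "real (card (S \<inter> {1..k})) \<le> real L"
     "\<tau> * (real (card (S \<inter> {1..k})) - 2 * real M) \<le> real L" by auto
  define s where "s = card (S \<inter> {1..k})"
  show ?case
  proof (cases "Suc k \<in> S")
    case True
    have "S \<inter> {1..Suc k} = insert (Suc k) (S \<inter> {1..k})"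
      using True by (auto simp: le_Suc_eq)
    then have cs: "card (S \<inter> {1..Suc k}) = s + 1" by (simp add: s_def)
    obtain u where u: "u \<in> A (Suc k)" "u + int g \<in> A (Suc k)" using Sg True by blast
    obtain v T where v: "v \<in> A (Suc k)" "v + int T * int g \<in> A (Suc k)" "\<tau> \<le> real T" "T \<le> 2*M"
      using ST True by blast
    show ?thesis
    proof (cases "1 \<le> T \<and> T \<le> L + 1")
      case True
      have f1: "{(a + v) + int j * int g | j. j \<le> L + T} \<subseteq> sumset A (Suc k)"
        using ap_ext[OF IH(1) v(1) v(2)] True by blast
      have f2: "real (s+1) \<le> real (L + T)" using IH(2) True s_def by simp
      have f3: "\<tau> * (real (s+1) - 2 * real M) \<le> real (L + T)"
      proof -
        have "\<tau> * (real (s+1) - 2 * real M) = \<tau> * (real s - 2 * real M) + \<tau>"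
          by (simp add: algebra_simps)
        then show ?thesis using IH(3) v(3) s_def by simp
      qed
      show ?thesis apply (rule exI[of _ "a+v"], rule exI[of _ "L+T"])
        using f1 f2 f3 cs by simp
    next
      case False
      have f1: "{(a + u) + int j * int g | j. j \<le> L + 1} \<subseteq> sumset A (Suc k)"
        using ap_ext[OF IH(1) u(1), of 1] u(2) by simp
      have f2: "real (s+1) \<le> real (L + 1)" using IH(2) s_def by simp
      have f3: "\<tau> * (real (s+1) - 2 * real M) \<le> real (L + 1)"
      proof (cases "T = 0")
        case True
        then have "\<tau> = 0" using v(3) tau by simp
        then show ?thesis by simp
      next
        case F: False
        then have "L + 1 < T" using False by simp
        then have "real (s+1) - 2 * real M \<le> 0" using IH(2) v(4) s_def by simp
        then have "\<tau> * (real (s+1) - 2 * real M) \<le> 0" using tau by (simp add: mult_nonneg_nonpos)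
        then show ?thesis by linarith
      qed
      show ?thesis apply (rule exI[of _ "a+u"], rule exI[of _ "L+1"])
        using f1 f2 f3 cs by simp
    qed
  next
    case False
    have "S \<inter> {1..Suc k} = S \<inter> {1..k}"
      using False by (auto simp: le_Suc_eq)
    then have cs: "card (S \<inter> {1..Suc k}) = s" by (simp add: s_def)
    obtain w where w: "w \<in> A (Suc k)" using ne Suc.prems by fastforce
    have f1: "{(a + w) + int j * int g | j. j \<le> L + 0} \<subseteq> sumset A (Suc k)"
      using ap_ext[OF IH(1) w, of 0] w by simp
    show ?thesis apply (rule exI[of _ "a+w"], rule exI[of _ "L"])
      using f1 cs IH s_def by simp
  qed
qed

lemma spread:
  fixes F :: "int set" and c :: int
  assumes "finite F" "F \<noteq> {}" "\<forall>x\<in>F. \<forall>y\<in>F. x < y \<longrightarrow> c \<le> y - x" "c \<ge> 0"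
  shows "Min F + c * (int (card F) - 1) \<le> Max F"
  using assms
proof (induction "card F" arbitrary: F)
  case 0
  then show ?case by simp
next
  case (Suc n)
  show ?case
  proof (cases "n = 0")
    case True
    then obtain x where "F = {x}" using Suc.hyps(2) card_1_singletonE by (metis One_nat_def)
    then show ?thesis by simp
  next
    case False
    define F' where "F' = F - {Max F}"
    have fin: "finite F'" using Suc.prems by (simp add: F'_def)
    have mF: "Max F \<in> F" using Suc.prems by simp
    have cF': "card F' = n" using Suc.hyps(2) mF Suc.prems(1) by (simp add: F'_def)
    have ne: "F' \<noteq> {}" using cF' False by auto
    have IH: "Min F' + c * (int (card F') - 1) \<le> Max F'"
      using Suc.hyps(1)[OF cF'[symmetric] fin ne] Suc.prems(3,4) by (auto simp: F'_def)
    have m1: "Max F' \<in> F" "Max F' \<noteq> Max F" using fin ne Max_in[OF fin ne] by (auto simp: F'_def)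
    have "Max F' \<le> Max F" using m1 Suc.prems(1) by simp
    then have "Max F' < Max F" using m1 by simp
    then have c1: "c \<le> Max F - Max F'" using Suc.prems(3) m1 mF by blast
    have "Min F' \<in> F" using Min_in[OF fin ne] by (auto simp: F'_def)
    then have c2: "Min F \<le> Min F'" using Suc.prems(1) by simp
    have "int (card F) = int n + 1" using Suc.hyps(2) by simp
    then have "c * (int (card F) - 1) = c * (int (card F') - 1) + c"
      using cF' by (simp add: algebra_simps)
    then show ?thesis using IH c1 c2 by linarith
  qed
qed

lemma gap:
  fixes A :: "int set"
  assumes "finite A" "card A \<ge> 2"
  shows "\<exists>x g. x \<in> A \<and> x + int g \<in> A \<and> g \<ge> 1 \<and> int g * (int (card A) - 1) \<le> Max A - Min A"
proof -
  define D where "D = {y - x | x y. x \<in> A \<and> y \<in> A \<and> x < y}"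
  have finD: "finite D"
    by (rule finite_subset[of _ "(\<lambda>(x,y). y - x) ` (A \<times> A)"]) (auto simp: D_def assms(1))
  have "\<not> card A \<le> Suc 0" using assms(2) by simp
  then obtain x0 y0 where "x0 \<in> A" "y0 \<in> A" "x0 \<noteq> y0"
    using card_le_Suc0_iff_eq[OF assms(1)] by blast
  then have "min x0 y0 \<in> A" "max x0 y0 \<in> A" "min x0 y0 < max x0 y0" by (auto simp: min_def max_def)
  then have "max x0 y0 - min x0 y0 \<in> D" unfolding D_def by blast
  then have neD: "D \<noteq> {}" by auto
  define c where "c = Min D"
  have "c \<in> D" using Min_in[OF finD neD] c_def by simp
  then obtain x y where xy: "c = y - x" "x \<in> A" "y \<in> A" "x < y" unfolding D_def by auto
  have le: "\<forall>x\<in>A. \<forall>y\<in>A. x < y \<longrightarrow> c \<le> y - x"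
    using finD unfolding c_def D_def by (auto intro!: Min_le)
  have "A \<noteq> {}" using xy by auto
  from spread[OF assms(1) this le] xy have "Min A + c * (int (card A) - 1) \<le> Max A" by simp
  then show ?thesis using xy
    by (intro exI[of _ x] exI[of _ "nat c"]) auto
qed

lemma pigeon:
  fixes I :: "'i set" and B :: "'i \<Rightarrow> 'a set"
  assumes "finite I" "I \<noteq> {}" "A \<subseteq> (\<Union>i\<in>I. B i)" "\<forall>i\<in>I. finite (B i)"
  shows "\<exists>i\<in>I. card A \<le> card I * card (B i)"
proof (rule ccontr)
  assume "\<not> ?thesis"
  then have lt: "\<forall>i\<in>I. card I * card (B i) < card A" by auto
  have fU: "finite (\<Union>i\<in>I. B i)" using assms by auto
  have "card A \<le> card (\<Union>i\<in>I. B i)" using card_mono[OF fU assms(3)] .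
  also have "\<dots> \<le> (\<Sum>i\<in>I. card (B i))" by (rule card_UN_le[OF assms(1)])
  finally have "card I * card A \<le> card I * (\<Sum>i\<in>I. card (B i))" by simp
  also have "\<dots> = (\<Sum>i\<in>I. card I * card (B i))" by (simp add: sum_distrib_left)
  also have "\<dots> < (\<Sum>i\<in>I. card A)" using lt assms(1,2) by (intro sum_strict_mono) auto
  also have "\<dots> = card I * card A" by simp
  finally show False by simp
qed

lemma resid:
  fixes A :: "int set" and g :: nat
  assumes "finite A" "A \<noteq> {}" "g \<ge> 1"
  shows "\<exists>v T. v \<in> A \<and> v + int T * int g \<in> A \<and> real (card A) \<le> real g * (real T + 1)
          \<and> int T * int g \<le> Max A - Min A"
proof -
  define B where "B r = {x \<in> A. x mod int g = r}" for r
  have sub: "A \<subseteq> (\<Union>r\<in>{0..<int g}. B r)"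
    using assms(3) by (auto simp: B_def)
  have "\<exists>r\<in>{0..<int g}. card A \<le> card {0..<int g} * card (B r)"
    by (rule pigeon[OF _ _ sub]) (use assms in \<open>auto simp: B_def\<close>)
  then obtain r where r: "r \<in> {0..<int g}" "card A \<le> card {0..<int g} * card (B r)"
    by blast
  define F where "F = B r"
  have cA: "card A \<le> g * card F" using r by (simp add: F_def)
  have finF: "finite F" using assms(1) by (simp add: F_def B_def)
  have "card A > 0" using assms by auto
  then have "card F > 0" using cA by (metis gr0I mult_0_right not_le)
  then have neF: "F \<noteq> {}" by auto
  have FA: "F \<subseteq> A" by (auto simp: F_def B_def)
  have dv: "int g dvd y - x" if "x \<in> F" "y \<in> F" for x y
    using that by (auto simp: F_def B_def mod_eq_dvd_iff)
  have pw: "\<forall>x\<in>F. \<forall>y\<in>F. x < y \<longrightarrow> int g \<le> y - x"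
    using dv by (auto intro: zdvd_imp_le)
  have sp: "Min F + int g * (int (card F) - 1) \<le> Max F"
    using spread[OF finF neF pw] by simp
  have mi: "Min F \<in> F" "Max F \<in> F" using finF neF by auto
  obtain q where q: "Max F - Min F = int g * q" using dv[OF mi(1) mi(2)] by (auto elim: dvdE)
  have "int g * (int (card F) - 1) \<le> int g * q" using sp q by linarith
  then have qF: "int (card F) - 1 \<le> q" using assms(3) by (simp add: mult_le_cancel_left)
  have q0: "q \<ge> 0" using qF \<open>card F > 0\<close> by linarith
  define T where "T = nat q"
  have T: "int T * int g = Max F - Min F" using q q0 by (simp add: T_def)
  have "Min F \<in> A" "Max F \<in> A" using mi FA by auto
  moreover have "Max F - Min F \<le> Max A - Min A"
    using mi FA assms(1) by (meson Max_ge Min_le diff_mono subsetD)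
  moreover have "real (card A) \<le> real g * (real T + 1)"
  proof -
    have "real (card F) \<le> real T + 1" using qF q0 T_def by linarith
    then have "real g * real (card F) \<le> real g * (real T + 1)" by (simp add: mult_left_mono)
    moreover have "real (card A) \<le> real g * real (card F)" using cA
      by (metis of_nat_le_iff of_nat_mult)
    ultimately show ?thesis by linarith
  qed
  ultimately show ?thesis using T by (intro exI[of _ "Min F"] exI[of _ T]) auto
qed

theorem lemma2p12:
  fixes \<delta> B :: real
  assumes "\<delta> > 0" and "B > 0"
  shows "\<exists>(C::real) (d0::nat). C \<ge> 1 \<and> d0 \<ge> 1 \<and>
    (\<forall>(M::nat) (K::nat) (A::nat \<Rightarrow> int set).
       M > 0 \<longrightarrow> real K \<ge> C * real M \<longrightarrow>
       (\<forall>i\<in>{1..K}. A i \<subseteq> {-int M..int M} \<and> real (card (A i)) \<ge> \<delta> * real M) \<longrightarrow>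
       \<delta> * real M \<ge> 2 \<longrightarrow>
       (\<exists>(a::int) (d::nat). 1 \<le> d \<and> d \<le> d0 \<and>
          {a + int i * int d | i::nat. real i \<le> B * (real M)^2} \<subseteq> sumset A K))"
proof -
  define D where "D = nat \<lceil>4/\<delta>\<rceil>"
  have pos: "4/\<delta> > 0" using assms by simp
  then have "0 < \<lceil>4/\<delta>\<rceil>" by simp
  then have Dint: "int D = \<lceil>4/\<delta>\<rceil>" unfolding D_def by linarith
  then have D1: "D \<ge> 1" using \<open>0 < \<lceil>4/\<delta>\<rceil>\<close> by linarith
  have Dge: "real D \<ge> 4/\<delta>"
  proof -
    have "4/\<delta> \<le> of_int \<lceil>4/\<delta>\<rceil>" by (rule le_of_int_ceiling)
    also have "of_int \<lceil>4/\<delta>\<rceil> = real D" using Dint by (metis of_int_of_nat_eq)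
    finally show ?thesis .
  qed
  have Dpos: "real D > 0" using D1 by simp
  define C where "C = 4*real D + 4*(real D)^2*B/\<delta> + 1"
  have t0: "4*(real D)^2*B/\<delta> \<ge> 0" using assms by simp
  have C1: "C \<ge> 1" using t0 Dpos by (simp add: C_def)
  show ?thesis
  proof (intro exI[of _ C] exI[of _ D] conjI allI impI)
    show "C \<ge> 1" by (rule C1)
    show "D \<ge> 1" by (rule D1)
    fix M K :: nat and A :: "nat \<Rightarrow> int set"
    assume hM: "M > 0" and hK: "real K \<ge> C * real M"
      and hA: "\<forall>i\<in>{1..K}. A i \<subseteq> {-int M..int M} \<and> real (card (A i)) \<ge> \<delta> * real M"
      and h2: "\<delta> * real M \<ge> 2"
    have Mpos: "real M > 0" using hM by simp
    have finA: "finite (A k) \<and> card (A k) \<ge> 2 \<and> A k \<noteq> {} \<and> Max (A k) - Min (A k) \<le> 2 * int M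
        \<and> real (card (A k)) \<ge> \<delta> * real M" if k: "k \<in> {1..K}" for k
    proof -
      have c: "real (card (A k)) \<ge> \<delta> * real M" "A k \<subseteq> {-int M..int M}" using hA k by auto
      then have c2: "card (A k) \<ge> 2" using h2 by linarith
      then have fin: "finite (A k)" by (metis card.infinite not_numeral_le_zero)
      have ne: "A k \<noteq> {}" using c2 by auto
      have "Max (A k) \<in> A k" "Min (A k) \<in> A k" using fin ne by auto
      then have "Max (A k) \<le> int M" "Min (A k) \<ge> - int M" using c(2) by auto
      then have "Max (A k) - Min (A k) \<le> 2 * int M" by linarith
      then show ?thesis using fin ne c c2 by blast
    qed
    have ex: "\<forall>k\<in>{1..K}. \<exists>g. 1 \<le> g \<and> g \<le> D \<and> (\<exists>x. x \<in> A k \<and> x + int g \<in> A k)"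
    proof
      fix k assume k: "k \<in> {1..K}"
      note fk = finA[OF k]
      obtain x g where xg: "x \<in> A k" "x + int g \<in> A k" "g \<ge> 1"
        "int g * (int (card (A k)) - 1) \<le> Max (A k) - Min (A k)"
        using gap[of "A k"] fk by blast
      have "int g * (int (card (A k)) - 1) \<le> 2 * int M" using xg(4) fk by linarith
      then have r1: "real g * (real (card (A k)) - 1) \<le> 2 * real M"
        by (metis (mono_tags, opaque_lifting) of_int_le_iff of_int_mult of_int_diff of_int_of_nat_eq of_int_1 of_int_numeral)
      have "\<delta> * real M / 2 \<le> real (card (A k)) - 1" using fk by linarith
      then have "real g * (\<delta> * real M / 2) \<le> real g * (real (card (A k)) - 1)"
        by (rule mult_left_mono) simp
      then have "real g * \<delta> * real M \<le> 4 * real M" using r1 by linarith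
      then have "real g * \<delta> \<le> 4" using Mpos
        by (metis mult.commute mult_le_cancel_left_pos)
      then have "real g \<le> 4 / \<delta>" using assms by (simp add: pos_le_divide_eq)
      then have "real g \<le> real D" using Dge by linarith
      then have "g \<le> D" by simp
      then show "\<exists>g. 1 \<le> g \<and> g \<le> D \<and> (\<exists>x. x \<in> A k \<and> x + int g \<in> A k)"
        using xg by blast
    qed
    obtain gg where gg: "\<forall>k\<in>{1..K}. 1 \<le> gg k \<and> gg k \<le> D \<and> (\<exists>x. x \<in> A k \<and> x + int (gg k) \<in> A k)"
      using bchoice[OF ex] by blast
    define Bs where "Bs g = {k\<in>{1..K}. gg k = g}" for g
    have sub: "{1..K} \<subseteq> (\<Union>g\<in>{1..D}. Bs g)" using gg by (auto simp: Bs_def)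
    have "\<exists>g\<in>{1..D}. card {1..K} \<le> card {1..D} * card (Bs g)"
      by (rule pigeon[OF _ _ sub]) (use D1 in \<open>auto simp: Bs_def\<close>)
    then obtain g where g: "g \<in> {1..D}" "K \<le> D * card (Bs g)" by auto
    define S where "S = Bs g"
    define \<tau> where "\<tau> = max 0 (\<delta> * real M / real D - 1)"
    have tau: "\<tau> \<ge> 0" by (simp add: \<tau>_def)
    have SK: "S \<subseteq> {1..K}" by (auto simp: S_def Bs_def)
    have Sg: "\<forall>k\<in>S. \<exists>u. u \<in> A k \<and> u + int g \<in> A k"
      using gg by (auto simp: S_def Bs_def)
    have ne: "\<forall>k\<in>{1..K}. A k \<noteq> {}" using finA by blast
    have ST: "\<forall>k\<in>S. \<exists>v T. v \<in> A k \<and> v + int T * int g \<in> A k \<and> \<tau> \<le> real T \<and> T \<le> 2*M"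
    proof
      fix k assume "k \<in> S"
      then have k: "k \<in> {1..K}" using SK by auto
      note fk = finA[OF k]
      have g1: "g \<ge> 1" "g \<le> D" using g by auto
      obtain v T where vT: "v \<in> A k" "v + int T * int g \<in> A k"
        "real (card (A k)) \<le> real g * (real T + 1)" "int T * int g \<le> Max (A k) - Min (A k)"
        using resid[of "A k" g] fk g1 by blast
      have "int T * 1 \<le> int T * int g" using g1 by (intro mult_left_mono) auto
      then have T2: "T \<le> 2 * M" using vT(4) fk by linarith
      have "real g * (real T + 1) \<le> real D * (real T + 1)"
        using g1 by (intro mult_right_mono) auto
      then have "\<delta> * real M \<le> real D * (real T + 1)" using vT(3) fk by linarith
      then have "\<delta> * real M / real D \<le> real T + 1" using Dpos
        by (simp add: pos_divide_le_eq mult.commute)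
      then have "\<tau> \<le> real T" by (simp add: \<tau>_def)
      then show "\<exists>v T. v \<in> A k \<and> v + int T * int g \<in> A k \<and> \<tau> \<le> real T \<and> T \<le> 2*M"
        using vT T2 by blast
    qed
    obtain a L where aL: "{a + int j * int g | j. j \<le> L} \<subseteq> sumset A K"
      "real (card (S \<inter> {1..K})) \<le> real L"
      "\<tau> * (real (card (S \<inter> {1..K})) - 2 * real M) \<le> real L"
      using grow[OF ne Sg ST tau SK, of K] by blast
    have cS: "S \<inter> {1..K} = S" using SK by auto
    define s where "s = real (card S)"
    have sL: "s \<le> real L" "\<tau> * (s - 2 * real M) \<le> real L" using aL cS by (auto simp: s_def)
    have "C * real M \<le> real D * s" using hK g(2) unfolding s_def S_def
      by (metis of_nat_le_iff of_nat_mult order_trans)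
    then have "C * real M / real D \<le> s" using Dpos by (simp add: pos_divide_le_eq mult.commute)
    moreover have "C * real M / real D = 4 * real M + 4 * real D * B * real M / \<delta> + real M / real D"
      using Dpos assms by (simp add: C_def field_simps power2_eq_square)
    moreover have "real M / real D \<ge> 0" by simp
    ultimately have s1: "4 * real M + 4 * real D * B * real M / \<delta> \<le> s" by linarith
    have BM: "B * real M \<ge> 0" using assms by simp
    have key: "B * (real M)^2 \<le> real L"
    proof (cases "\<delta> * real M < 2 * real D")
      case True
      then have "real M \<le> 2 * real D / \<delta>" using assms by (simp add: pos_le_divide_eq mult.commute)
      then have "B * real M * real M \<le> B * real M * (2 * real D / \<delta>)"
        using BM by (rule mult_left_mono)
      also have "\<dots> = 2 * real D * B * real M / \<delta>" by simp
      also have "\<dots> \<le> 4 * real D * B * real M / \<delta>"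
        using assms Dpos Mpos by (simp add: divide_right_mono)
      finally show ?thesis using s1 sL Mpos by (simp add: power2_eq_square)
    next
      case False
      then have "2 \<le> \<delta> * real M / real D" using Dpos by (simp add: pos_le_divide_eq mult.commute)
      then have t1: "\<delta> * real M / (2 * real D) \<le> \<tau>" by (simp add: \<tau>_def)
      have t2: "4 * real D * B * real M / \<delta> \<le> s - 2 * real M" using s1 Mpos by linarith
      have "(\<delta> * real M / (2 * real D)) * (4 * real D * B * real M / \<delta>) \<le> \<tau> * (s - 2 * real M)"
        using t1 t2 assms Dpos Mpos tau by (intro mult_mono) auto
      moreover have "(\<delta> * real M / (2 * real D)) * (4 * real D * B * real M / \<delta>) = 2 * (B * (real M)^2)"
        using assms Dpos by (simp add: field_simps power2_eq_square)
      moreover have "B * (real M)^2 \<ge> 0" using assms by simp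
      ultimately show ?thesis using sL by linarith
    qed
    have "{a + int i * int g | i::nat. real i \<le> B * (real M)^2} \<subseteq> {a + int j * int g | j. j \<le> L}"
    proof
      fix z assume "z \<in> {a + int i * int g | i::nat. real i \<le> B * (real M)^2}"
      then obtain i where "z = a + int i * int g" "real i \<le> B * (real M)^2" by auto
      then have "i \<le> L" using key by linarith
      then show "z \<in> {a + int j * int g | j. j \<le> L}" using \<open>z = _\<close> by blast
    qed
    then show "\<exists>(a::int) (d::nat). 1 \<le> d \<and> d \<le> D \<and>
          {a + int i * int d | i::nat. real i \<le> B * (real M)^2} \<subseteq> sumset A K"
      using aL(1) g(1) by (intro exI[of _ a] exI[of _ g]) auto
  qed
qed

end
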